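(* Let $n\ge1$ and let $p_1,\dots,p_{2n}\in E=\mathbb C/\Lambda$ be distinct. Then, as an identity of functions of $(p_1,\dots,p_{2n})$, $$\sum_{i=1}^{2n}(-1)^i\wp_i=2\Big(\sum_{\substack{i<j\\ i,j\text{ even}}}\wp_{ij}-\sum_{\substack{i<j\\ i,j\text{ odd}}}\wp_{ij}\Big)=\sum_{i=1}^{2n}(-1)^i\hat\zeta_i^{\,2}.$$
   Context: $\wp_{ij}=\wp(p_i-p_j)$, $\zeta_{ij}=\zeta(p_i-p_j)$ for $i\ne j$, with the convention $\wp_{ii}=\zeta_{ii}=0$; $\wp_i=\sum_{j}\wp_{ij}$; $\hat\zeta_{ij}=(-1)^j\zeta_{ij}$ and $\hat\zeta_i=\sum_{j=1}^{2n}\hat\zeta_{ij}$. Here $\wp,\zeta$ are the Weierstrass functions of $\Lambda$. *)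

theory Defs
  imports "HOL-Analysis.Analysis"
begin

definition lattice :: "complex \<Rightarrow> complex \<Rightarrow> complex set" where
  "lattice \<omega>1 \<omega>2 = {of_int m * \<omega>1 + of_int k * \<omega>2 | m k. True}"

text \<open>Weierstrass wp-function of a lattice L (absolutely convergent, hence unconditional sum).\<close>
definition weierstrass_p :: "complex set \<Rightarrow> complex \<Rightarrow> complex" where
  "weierstrass_p L z = 1 / z\<^sup>2 + infsum (\<lambda>w. 1 / (z - w)\<^sup>2 - 1 / w\<^sup>2) (L - {0})"

definition weierstrass_zeta :: "complex set \<Rightarrow> complex \<Rightarrow> complex" where
  "weierstrass_zeta L z = 1 / z + infsum (\<lambda>w. 1 / (z - w) + 1 / w + z / w\<^sup>2) (L - {0})"

definition wp_ij :: "complex set \<Rightarrow> (nat \<Rightarrow> complex) \<Rightarrow> nat \<Rightarrow> nat \<Rightarrow> complex" where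
  "wp_ij L p i j = (if i = j then 0 else weierstrass_p L (p i - p j))"

definition zeta_ij :: "complex set \<Rightarrow> (nat \<Rightarrow> complex) \<Rightarrow> nat \<Rightarrow> nat \<Rightarrow> complex" where
  "zeta_ij L p i j = (if i = j then 0 else weierstrass_zeta L (p i - p j))"

definition wp_i :: "complex set \<Rightarrow> nat \<Rightarrow> (nat \<Rightarrow> complex) \<Rightarrow> nat \<Rightarrow> complex" where
  "wp_i L n p i = (\<Sum>j=1..2*n. wp_ij L p i j)"

definition zeta_hat_ij :: "complex set \<Rightarrow> (nat \<Rightarrow> complex) \<Rightarrow> nat \<Rightarrow> nat \<Rightarrow> complex" where
  "zeta_hat_ij L p i j = (-1) ^ j * zeta_ij L p i j"

definition zeta_hat_i :: "complex set \<Rightarrow> nat \<Rightarrow> (nat \<Rightarrow> complex) \<Rightarrow> nat \<Rightarrow> complex" where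
  "zeta_hat_i L n p i = (\<Sum>j=1..2*n. zeta_hat_ij L p i j)"

end

theory Submission
  imports Defs "HOL-Complex_Analysis.Complex_Analysis"
begin



locale wlat =
  fixes \<omega>1 \<omega>2 :: complex
  assumes indep: "Im (\<omega>2 / \<omega>1) \<noteq> 0"
begin

abbreviation LL where "LL \<equiv> lattice \<omega>1 \<omega>2"

lemma om1_nz: "\<omega>1 \<noteq> 0"
  using indep by auto

lemma lat_iff: "w \<in> LL \<longleftrightarrow> (\<exists>m k. w = of_int m * \<omega>1 + of_int k * \<omega>2)"
  by (auto simp: lattice_def)

lemma lat_0[simp]: "0 \<in> LL"
  unfolding lat_iff by (rule exI[of _ 0], rule exI[of _ 0]) simp

lemma lat_add: assumes "a \<in> LL" "b \<in> LL" shows "a + b \<in> LL"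
proof -
  obtain m k where a: "a = of_int m * \<omega>1 + of_int k * \<omega>2" using assms(1) lat_iff by blast
  obtain m' k' where b: "b = of_int m' * \<omega>1 + of_int k' * \<omega>2" using assms(2) lat_iff by blast
  have "a + b = of_int (m+m') * \<omega>1 + of_int (k+k') * \<omega>2" unfolding a b by (simp add: algebra_simps)
  then show ?thesis unfolding lat_iff by blast
qed

lemma lat_uminus: assumes "a \<in> LL" shows "- a \<in> LL"
proof -
  obtain m k where a: "a = of_int m * \<omega>1 + of_int k * \<omega>2" using assms(1) lat_iff by blast
  have "- a = of_int (-m) * \<omega>1 + of_int (-k) * \<omega>2" unfolding a by (simp add: algebra_simps)
  then show ?thesis unfolding lat_iff by blast
qed

lemma lat_uminus_iff[simp]: "- a \<in> LL \<longleftrightarrow> a \<in> LL"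
  using lat_uminus[of a] lat_uminus[of "-a"] by auto

lemma lat_diff: "a \<in> LL \<Longrightarrow> b \<in> LL \<Longrightarrow> a - b \<in> LL"
  using lat_add[of a "-b"] by simp

lemma lat_add_iff1: "b \<in> LL \<Longrightarrow> a + b \<in> LL \<longleftrightarrow> a \<in> LL"
  using lat_add[of a b] lat_diff[of "a+b" b] by auto

lemma lat_om1: "\<omega>1 \<in> LL" and lat_om2: "\<omega>2 \<in> LL"
  unfolding lat_iff by (rule exI[of _ 1], rule exI[of _ 0], simp) (rule exI[of _ 0], rule exI[of _ 1], simp)

lemma lat_int: "of_int m * \<omega>1 + of_int k * \<omega>2 \<in> LL"
  unfolding lat_iff by blast

lemma lower_bound: "\<exists>c>0. \<forall>a b::real. c * (\<bar>a\<bar> + \<bar>b\<bar>) \<le> norm (of_real a * \<omega>1 + of_real b * \<omega>2)"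
proof -
  define \<tau> where "\<tau> = \<omega>2 / \<omega>1"
  define s where "s = \<bar>Im \<tau>\<bar>"
  define t where "t = norm \<tau>"
  have s: "s > 0" using indep by (simp add: s_def \<tau>_def)
  have t: "t \<ge> 0" by (simp add: t_def)
  define c where "c = norm \<omega>1 * s / (s + t + 1)"
  have c: "c > 0" using s t om1_nz by (simp add: c_def)
  show ?thesis
  proof (intro exI[of _ c] conjI allI c)
    fix a b :: real
    define X where "X = norm (of_real a + of_real b * \<tau>)"
    have eq: "of_real a * \<omega>1 + of_real b * \<omega>2 = \<omega>1 * (of_real a + of_real b * \<tau>)"
      using om1_nz by (simp add: \<tau>_def field_simps)
    have 1: "\<bar>b\<bar> * s \<le> X"
    proof -
      have "\<bar>Im (of_real a + of_real b * \<tau>)\<bar> \<le> X" unfolding X_def by (rule abs_Im_le_cmod)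
      then show ?thesis by (simp add: s_def abs_mult)
    qed
    have 2: "\<bar>a\<bar> \<le> X + \<bar>b\<bar> * t"
    proof -
      have "norm (complex_of_real a) \<le> norm (of_real a + of_real b * \<tau>) + norm (of_real b * \<tau>)"
        by (metis add_diff_cancel norm_triangle_ineq4)
      then show ?thesis by (simp add: X_def t_def norm_mult)
    qed
    have X0: "X \<ge> 0" by (simp add: X_def)
    have "s * (\<bar>a\<bar> + \<bar>b\<bar>) \<le> X * (s + t + 1)"
    proof -
      have "s * \<bar>a\<bar> \<le> s * (X + \<bar>b\<bar> * t)" using 2 s by (intro mult_left_mono) auto
      also have "\<dots> = s * X + (\<bar>b\<bar> * s) * t" by (simp add: algebra_simps)
      also have "\<dots> \<le> s * X + X * t" using 1 t by (simp add: mult_right_mono)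
      finally show ?thesis using 1 by (simp add: algebra_simps)
    qed
    then have "(\<bar>a\<bar> + \<bar>b\<bar>) * s / (s + t + 1) \<le> X" using s t by (simp add: field_simps)
    then have "norm \<omega>1 * ((\<bar>a\<bar> + \<bar>b\<bar>) * s / (s + t + 1)) \<le> norm \<omega>1 * X"
      by (intro mult_left_mono) auto
    then show "c * (\<bar>a\<bar> + \<bar>b\<bar>) \<le> norm (of_real a * \<omega>1 + of_real b * \<omega>2)"
      unfolding eq norm_mult X_def[symmetric] c_def by (simp add: field_simps)
  qed
qed


lemma finite_lat_ball: "finite {w \<in> LL. norm w \<le> R}"
proof -
  obtain c where c: "c > 0" "\<forall>a b::real. c * (\<bar>a\<bar>+\<bar>b\<bar>) \<le> norm (of_real a * \<omega>1 + of_real b * \<omega>2)"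
    using lower_bound by blast
  define K where "K = \<lceil>R / c\<rceil>"
  have "{w \<in> LL. norm w \<le> R} \<subseteq> (\<lambda>(m,k). of_int m * \<omega>1 + of_int k * \<omega>2) ` ({-K..K} \<times> {-K..K})"
  proof
    fix w assume w: "w \<in> {w \<in> LL. norm w \<le> R}"
    then obtain m k where wk: "w = of_int m * \<omega>1 + of_int k * \<omega>2" using lat_iff by blast
    have "c * (\<bar>real_of_int m\<bar> + \<bar>real_of_int k\<bar>) \<le> norm w"
      using c(2)[rule_format, of "of_int m" "of_int k"] by (simp add: wk)
    also have "\<dots> \<le> R" using w by simp
    finally have "\<bar>real_of_int m\<bar> + \<bar>real_of_int k\<bar> \<le> R / c" using c(1) by (simp add: field_simps)
    then have "real_of_int \<bar>m\<bar> \<le> of_int K" "real_of_int \<bar>k\<bar> \<le> of_int K"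
      using le_of_int_ceiling[of "R/c"] unfolding K_def by linarith+
    then have "\<bar>m\<bar> \<le> K" "\<bar>k\<bar> \<le> K" by linarith+
    then have mk: "(m,k) \<in> {-K..K} \<times> {-K..K}" by (auto simp: abs_le_iff)
    show "w \<in> (\<lambda>(m,k). of_int m * \<omega>1 + of_int k * \<omega>2) ` ({-K..K} \<times> {-K..K})"
      by (rule image_eqI[OF _ mk]) (simp add: wk)
  qed
  then show ?thesis by (rule finite_subset) auto
qed

lemma lat_discrete: "\<exists>e>0. \<forall>w\<in>LL. w \<noteq> z \<longrightarrow> e \<le> dist w z"
proof -
  obtain d where d: "d > 0" "\<forall>x\<in>{w\<in>LL. norm w \<le> norm z + 1}. x \<noteq> z \<longrightarrow> d \<le> dist z x"
    using finite_set_avoid[OF finite_lat_ball] by blast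
  show ?thesis
  proof (intro exI[of _ "min d 1"] conjI ballI impI)
    fix w assume w: "w \<in> LL" "w \<noteq> z"
    show "min d 1 \<le> dist w z"
    proof (cases "norm w \<le> norm z + 1")
      case True then show ?thesis using d w by (auto simp: dist_commute)
    next
      case False
      have "norm w - norm z \<le> dist w z" by (simp add: dist_norm norm_triangle_ineq2)
      then show ?thesis using False by linarith
    qed
  qed (use d in auto)
qed

definition aw :: "int \<Rightarrow> real" where "aw m = (1 + \<bar>real_of_int m\<bar>) powr (-3/2)"

lemma aw_nonneg: "aw m \<ge> 0" by (simp add: aw_def)

lemma aw_summable: "aw summable_on UNIV"
proof -
  have s0: "summable (\<lambda>n. real n powr (-3/2))" by (simp add: summable_real_powr_iff)
  then have s1: "summable (\<lambda>n. real (Suc n) powr (-3/2))" by (subst summable_Suc_iff)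
  have nn: "(\<lambda>n. real (Suc n) powr (-3/2)) summable_on UNIV"
    using s1 by (subst summable_on_UNIV_nonneg_real_iff) auto
  have a1: "aw summable_on range int"
    by (subst summable_on_reindex) (use nn in \<open>auto simp: inj_on_def o_def aw_def add.commute\<close>)
  have a2: "aw summable_on range (\<lambda>n. - int n)"
    by (subst summable_on_reindex) (use nn in \<open>auto simp: inj_on_def o_def aw_def add.commute\<close>)
  have U: "(UNIV :: int set) = range int \<union> range (\<lambda>n. - int n)"
  proof -
    have "x \<in> range int \<union> range (\<lambda>n. - int n)" for x :: int
    proof (cases "x \<ge> 0")
      case True
      then have "x = int (nat x)" by simp
      then show ?thesis by blast
    next
      case False
      then have "x = - int (nat (- x))" by simp
      then show ?thesis by blast
    qed
    then show ?thesis by blast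
  qed
  show ?thesis using summable_on_union[OF a1 a2] U by simp
qed

lemma aw_prod_summable: "(\<lambda>(m,k). aw m * aw k) summable_on UNIV"
proof -
  have "(\<lambda>(m,k). aw m * aw k) summable_on Sigma UNIV (\<lambda>_. UNIV)"
  proof (rule summable_on_SigmaI[where g = "\<lambda>m. aw m * infsum aw UNIV"])
    show "((\<lambda>y. case (x, y) of (m, k) \<Rightarrow> aw m * aw k) has_sum aw x * infsum aw UNIV) UNIV" for x
      using has_sum_cmult_right[OF has_sum_infsum[OF aw_summable], of "aw x"] by simp
    show "(\<lambda>m. aw m * infsum aw UNIV) summable_on UNIV"
      by (rule summable_on_cmult_left[OF aw_summable])
  qed (auto simp: aw_nonneg)
  then show ?thesis by simp
qed

lemma aw_bound:
  fixes m k :: int and c N :: real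
  assumes mk: "(m,k) \<noteq> (0,0)" and c: "c > 0" and N: "c * (\<bar>real_of_int m\<bar> + \<bar>real_of_int k\<bar>) \<le> N"
  shows "1 / N ^ 3 \<le> 8 / c ^ 3 * (aw m * aw k)"
proof -
  define u where "u = \<bar>real_of_int m\<bar> + \<bar>real_of_int k\<bar>"
  define x where "x = 1 + \<bar>real_of_int m\<bar>"
  define y where "y = 1 + \<bar>real_of_int k\<bar>"
  have u1: "u \<ge> 1" using mk unfolding u_def by (cases "m = 0") auto
  have x: "x > 0" "x \<le> 2 * u" using u1 by (auto simp: x_def u_def)
  have y: "y > 0" "y \<le> 2 * u" using u1 by (auto simp: y_def u_def)
  have "x * y \<le> (2 * u) * (2 * u)"
    using x y u1 by (intro mult_mono) auto
  then have xy: "x * y \<le> (2 * u) powr 2"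
    using u1 by (simp add: powr_numeral power2_eq_square)
  have "(x * y) powr (3/2) \<le> ((2 * u) powr 2) powr (3/2)"
    using xy x y by (intro powr_mono2) auto
  also have "\<dots> = (2 * u) powr (2 * (3/2))" by (rule powr_powr)
  also have "\<dots> = (2 * u) powr 3" by simp
  also have "\<dots> = (2 * u) ^ 3" using u1 by (subst powr_numeral) auto
  finally have xy3: "(x * y) powr (3/2) \<le> 8 * u ^ 3" by simp
  have am: "aw m = x powr (-(3/2))" by (simp add: aw_def x_def)
  have ak: "aw k = y powr (-(3/2))" by (simp add: aw_def y_def)
  have "aw m * aw k = (x * y) powr (-(3/2))" unfolding am ak using x y by (simp add: powr_mult)
  also have "\<dots> = 1 / (x * y) powr (3/2)" by (rule powr_minus_divide)
  finally have aw: "aw m * aw k = 1 / (x * y) powr (3/2)" .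
  have pos: "(x * y) powr (3/2) > 0" using x y by simp
  have cu: "c * u > 0" using c u1 by simp
  have cuN: "c * u \<le> N" using N unfolding u_def .
  have Np: "N > 0" using cu cuN by linarith
  have c3: "c ^ 3 > 0" using c by simp
  have u3: "u ^ 3 > 0" using u1 by simp
  have "(c * u) ^ 3 \<le> N ^ 3" using cuN cu by (intro power_mono) auto
  then have "1 / N ^ 3 \<le> 1 / (c * u) ^ 3"
    by (rule divide_left_mono) (use Np cu in auto)
  also have "\<dots> = 8 / c ^ 3 * (1 / (8 * u ^ 3))" using c3 u3 by (simp add: power_mult_distrib)
  also have "1 / (8 * u ^ 3) \<le> 1 / (x * y) powr (3/2)"
    by (rule divide_left_mono[OF xy3]) (use pos u3 in auto)
  then have "8 / c ^ 3 * (1 / (8 * u ^ 3)) \<le> 8 / c ^ 3 * (1 / (x * y) powr (3/2))"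
    by (rule mult_left_mono) (use c3 in auto)
  finally have "1 / N ^ 3 \<le> 8 / c ^ 3 * (1 / (x * y) powr (3/2))" .
  then show ?thesis by (simp only: aw)
qed

lemma summ3: "(\<lambda>w. 1 / norm w ^ 3) summable_on (LL - {0})"
proof -
  obtain c where c: "c > 0" "\<forall>a b::real. c * (\<bar>a\<bar>+\<bar>b\<bar>) \<le> norm (of_real a * \<omega>1 + of_real b * \<omega>2)"
    using lower_bound by blast
  define g where "g = (\<lambda>(m::int,k::int). of_int m * \<omega>1 + of_int k * \<omega>2)"
  have gb: "c * (\<bar>real_of_int m\<bar> + \<bar>real_of_int k\<bar>) \<le> norm (g (m,k))" for m k
    using c(2)[rule_format, of "of_int m" "of_int k"] by (simp add: g_def)
  have inj: "inj_on g UNIV"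
  proof (rule inj_onI)
    fix a b assume "g a = g b"
    then obtain m k m' k' where ab: "a = (m,k)" "b = (m',k')" "g (m,k) = g (m',k')" by (cases a, cases b) auto
    then have "g (m - m', k - k') = 0" by (simp add: g_def algebra_simps)
    then have "c * (\<bar>real_of_int (m - m')\<bar> + \<bar>real_of_int (k - k')\<bar>) \<le> 0" using gb[of "m-m'" "k-k'"] by simp
    then have "\<bar>real_of_int (m - m')\<bar> + \<bar>real_of_int (k - k')\<bar> \<le> 0" using c(1)
      by (simp add: mult_le_0_iff)
    then show "a = b" using ab by auto
  qed
  have g0: "g (0,0) = 0" by (simp add: g_def)
  have img: "LL - {0} = g ` (UNIV - {(0,0)})"
  proof (rule set_eqI, rule iffI)
    fix w assume "w \<in> LL - {0}"
    then have w: "w \<in> LL" "w \<noteq> 0" by auto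
    then obtain m k where "w = of_int m * \<omega>1 + of_int k * \<omega>2" using lat_iff by blast
    then have wg: "w = g (m,k)" by (simp add: g_def)
    have "(m,k) \<noteq> (0,0)"
    proof
      assume "(m,k) = (0,0)"
      then have "w = 0" using wg g0 by simp
      then show False using w by simp
    qed
    then show "w \<in> g ` (UNIV - {(0,0)})" using image_eqI[of w g "(m,k)"] wg by blast
  next
    fix w assume "w \<in> g ` (UNIV - {(0,0)})"
    then obtain x where x: "x \<in> UNIV - {(0,0)}" "w = g x" by blast
    obtain m k where x': "x = (m,k)" by (cases x)
    have "w \<in> LL" using x x' by (simp add: g_def lat_int)
    moreover have "w \<noteq> 0"
    proof
      assume "w = 0"
      then have "g x = g (0,0)" using x g0 by simp
      then have "x = (0,0)" using inj by (simp add: inj_eq)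
      then show False using x by simp
    qed
    ultimately show "w \<in> LL - {0}" by simp
  qed
  have "((\<lambda>w. 1 / norm w ^ 3) \<circ> g) summable_on (UNIV - {(0,0)})"
  proof (rule summable_on_comparison_test)
    show "(\<lambda>x. 8 / c ^ 3 * (case x of (m,k) \<Rightarrow> aw m * aw k)) summable_on (UNIV - {(0,0)})"
      by (intro summable_on_cmult_right summable_on_subset[OF aw_prod_summable]) auto
    fix x assume x: "x \<in> UNIV - {(0::int,0::int)}"
    obtain m k where x': "x = (m,k)" by (cases x)
    show "((\<lambda>w. 1 / norm w ^ 3) \<circ> g) x \<le> 8 / c ^ 3 * (case x of (m,k) \<Rightarrow> aw m * aw k)"
      using aw_bound[OF _ c(1) gb[of m k]] x x' by simp
    show "0 \<le> ((\<lambda>w. 1 / norm w ^ 3) \<circ> g) x" by simp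
  qed
  then show ?thesis unfolding img by (subst summable_on_reindex) (use inj in \<open>auto intro: inj_on_subset\<close>)
qed

end




definition pterm :: "complex \<Rightarrow> complex \<Rightarrow> complex" where "pterm z w = 1/(z-w)^2 - 1/w^2"
definition zterm :: "complex \<Rightarrow> complex \<Rightarrow> complex" where "zterm z w = 1/(z-w) + 1/w + z/w^2"

lemma wp_eq: "weierstrass_p L z = 1/z^2 + infsum (pterm z) (L - {0})"
  by (simp add: weierstrass_p_def pterm_def[abs_def])
lemma wz_eq: "weierstrass_zeta L z = 1/z + infsum (zterm z) (L - {0})"
  by (simp add: weierstrass_zeta_def zterm_def[abs_def])

lemma has_sum_diff':
  fixes f g :: "'a \<Rightarrow> complex"
  assumes "(f has_sum a) A" "(g has_sum b) A" shows "((\<lambda>x. f x - g x) has_sum (a - b)) A"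
proof -
  have "((\<lambda>x. - g x) has_sum (- b)) A" using assms(2) by (simp add: has_sum_uminus)
  from has_sum_add[OF assms(1) this] show ?thesis by simp
qed

lemma pterm_bound:
  assumes w: "w \<noteq> 0" and zw: "2 * norm z \<le> norm w"
  shows "norm (pterm z w) \<le> 10 * norm z / norm w ^ 3"
proof -
  have nw: "norm w > 0" using w by simp
  have "norm w - norm z \<le> norm (w - z)" by (rule norm_triangle_ineq2)
  then have d: "norm (z - w) \<ge> norm w / 2" using zw by (simp add: norm_minus_commute)
  then have zw0: "z - w \<noteq> 0" using nw by auto
  have eq1: "pterm z w = (w^2 - (z-w)^2) / ((z-w)^2 * w^2)"
    using zw0 w by (simp add: pterm_def field_simps)
  have "w^2 - (z-w)^2 = z * (2*w - z)" by (simp add: power2_eq_square algebra_simps)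
  then have eq: "pterm z w = z * (2*w - z) / ((z-w)^2 * w^2)" using eq1 by simp
  have n2: "norm (2*w - z) \<le> 5/2 * norm w"
  proof -
    have "norm (2*w - z) \<le> norm (2*w) + norm z" by (rule norm_triangle_ineq4)
    then show ?thesis using zw by (simp add: norm_mult)
  qed
  have "norm (pterm z w) = norm z * norm (2*w - z) / (norm (z-w)^2 * norm w^2)"
    unfolding eq by (simp add: norm_mult norm_divide norm_power)
  also have "\<dots> \<le> norm z * (5/2 * norm w) / ((norm w / 2)^2 * norm w^2)"
  proof (rule frac_le)
    show "norm z * norm (2 * w - z) \<le> norm z * (5 / 2 * norm w)" using n2 by (intro mult_left_mono) auto
    show "0 < (norm w / 2)\<^sup>2 * (norm w)\<^sup>2" using nw by simp
    show "(norm w / 2)\<^sup>2 * (norm w)\<^sup>2 \<le> (norm (z - w))\<^sup>2 * (norm w)\<^sup>2"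
      using d nw by (intro mult_right_mono power_mono) auto
  qed simp
  also have "\<dots> = 10 * norm z / norm w ^ 3" using nw by (simp add: field_simps power2_eq_square power3_eq_cube)
  finally show ?thesis .
qed

lemma zterm_bound:
  assumes w: "w \<noteq> 0" and zw: "2 * norm z \<le> norm w"
  shows "norm (zterm z w) \<le> 2 * norm z ^ 2 / norm w ^ 3"
proof -
  have nw: "norm w > 0" using w by simp
  have "norm w - norm z \<le> norm (w - z)" by (rule norm_triangle_ineq2)
  then have d: "norm (z - w) \<ge> norm w / 2" using zw by (simp add: norm_minus_commute)
  then have zw0: "z - w \<noteq> 0" using nw by auto
  have eq: "zterm z w = z^2 / (w^2 * (z - w))"
    using zw0 w by (simp add: zterm_def field_simps power2_eq_square)
  have "norm (zterm z w) = norm z ^ 2 / (norm w ^ 2 * norm (z - w))"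
    unfolding eq by (simp add: norm_mult norm_divide norm_power)
  also have "\<dots> \<le> norm z ^ 2 / (norm w ^ 2 * (norm w / 2))"
    using d nw zw0 by (intro divide_left_mono mult_left_mono mult_pos_pos) auto
  also have "\<dots> = 2 * norm z ^ 2 / norm w ^ 3" using nw by (simp add: field_simps power2_eq_square power3_eq_cube)
  finally show ?thesis .
qed

lemma zterm_deriv:
  assumes "y \<noteq> w" "w \<noteq> 0"
  shows "((\<lambda>y. zterm y w) has_field_derivative - pterm y w) (at y)"
proof -
  have yw: "y - w \<noteq> 0" using assms by simp
  have "((\<lambda>y. 1/(y-w) + 1/w + y/w^2) has_field_derivative (- (1 / (y-w)^2) + 0 + 1/w^2)) (at y)"
    using yw assms by (auto intro!: derivative_eq_intros simp: power2_eq_square field_simps)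
  then show ?thesis unfolding zterm_def[abs_def] pterm_def by simp
qed

context wlat begin

lemma summable_bound:
  fixes f :: "complex \<Rightarrow> complex"
  assumes "\<And>w. w \<in> LL - {0} \<Longrightarrow> 2 * norm z \<le> norm w \<Longrightarrow> norm (f w) \<le> C / norm w ^ 3"
  shows "f summable_on (LL - {0})"
proof -
  define A where "A = {w \<in> LL - {0}. norm w < 2 * norm z}"
  define B where "B = {w \<in> LL - {0}. 2 * norm z \<le> norm w}"
  have fA: "finite A" by (rule finite_subset[OF _ finite_lat_ball[of "2 * norm z"]]) (auto simp: A_def)
  have sA: "f summable_on A" using fA by simp
  have "(\<lambda>w. norm (f w)) summable_on B"
  proof (rule Infinite_Sum.abs_summable_on_comparison_test'[where g = "\<lambda>w. C * (1 / norm w ^ 3)"])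
    show "(\<lambda>w. C * (1 / norm w ^ 3)) summable_on B"
      by (intro summable_on_cmult_right summable_on_subset[OF summ3]) (auto simp: B_def)
    fix w assume "w \<in> B" then show "norm (f w) \<le> C * (1 / norm w ^ 3)" using assms by (auto simp: B_def)
  qed
  then have sB: "f summable_on B" by (rule abs_summable_summable)
  have "LL - {0} = A \<union> B" by (auto simp: A_def B_def)
  then show ?thesis using summable_on_union[OF sA sB] by simp
qed

lemma pterm_summable: "pterm z summable_on (LL - {0})"
  by (rule summable_bound[where C = "10 * norm z"]) (auto intro: pterm_bound)

lemma zterm_summable: "zterm z summable_on (LL - {0})"
  by (rule summable_bound[where C = "2 * norm z ^ 2"]) (auto intro: zterm_bound)

definition Tl :: "real \<Rightarrow> complex set" where "Tl \<rho> = {w \<in> LL - {0}. 2 * \<rho> < norm w}"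
definition Kl :: "real \<Rightarrow> complex set" where "Kl \<rho> = {w \<in> LL - {0}. norm w \<le> 2 * \<rho>}"
definition ZT :: "real \<Rightarrow> complex \<Rightarrow> complex" where "ZT \<rho> y = infsum (zterm y) (Tl \<rho>)"
definition PT :: "real \<Rightarrow> complex \<Rightarrow> complex" where "PT \<rho> y = infsum (pterm y) (Tl \<rho>)"

lemma Kl_finite: "finite (Kl \<rho>)"
  by (rule finite_subset[OF _ finite_lat_ball[of "2 * \<rho>"]]) (auto simp: Kl_def)

lemma Tl_sub: "Tl \<rho> \<subseteq> LL - {0}" by (auto simp: Tl_def)

lemma KT: "LL - {0} = Kl \<rho> \<union> Tl \<rho>" "Kl \<rho> \<inter> Tl \<rho> = {}" by (auto simp: Kl_def Tl_def)

lemma decomp_z: "weierstrass_zeta LL y = 1/y + (\<Sum>w\<in>Kl \<rho>. zterm y w) + ZT \<rho> y"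
proof -
  have "infsum (zterm y) (LL - {0}) = infsum (zterm y) (Kl \<rho>) + infsum (zterm y) (Tl \<rho>)"
    unfolding KT(1)[of \<rho>]
    by (intro infsum_Un_disjoint summable_on_subset[OF zterm_summable] KT(2)) (use KT(1)[of \<rho>] in auto)
  then show ?thesis by (simp add: wz_eq ZT_def Kl_finite)
qed

lemma decomp_p: "weierstrass_p LL y = 1/y^2 + (\<Sum>w\<in>Kl \<rho>. pterm y w) + PT \<rho> y"
proof -
  have "infsum (pterm y) (LL - {0}) = infsum (pterm y) (Kl \<rho>) + infsum (pterm y) (Tl \<rho>)"
    unfolding KT(1)[of \<rho>]
    by (intro infsum_Un_disjoint summable_on_subset[OF pterm_summable] KT(2)) (use KT(1)[of \<rho>] in auto)
  then show ?thesis by (simp add: wp_eq PT_def Kl_finite)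
qed

lemma tail_deriv:
  fixes y :: complex
  assumes r: "\<rho> > 0" and y: "y \<in> ball 0 \<rho>"
  shows "(ZT \<rho> has_field_derivative - PT \<rho> y) (at y)"
proof -
  define F where "F = finite_subsets_at_top (Tl \<rho>)"
  define f where "f X y = (\<Sum>w\<in>X. zterm y w)" for X y
  define f' where "f' X y = (\<Sum>w\<in>X. - pterm y w)" for X y
  have nz: "y \<noteq> w" "w \<noteq> 0" "2 * norm y \<le> norm w" if "y \<in> cball 0 \<rho>" "w \<in> Tl \<rho>" for y w :: complex
    using that r by (auto simp: Tl_def)
  have ev: "eventually (\<lambda>X. continuous_on (cball 0 \<rho>) (f X) \<and>
      (\<forall>y\<in>ball 0 \<rho>. (f X has_field_derivative f' X y) (at y))) F"
    unfolding F_def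
  proof (rule eventually_finite_subsets_at_top_weakI, intro conjI ballI)
    fix X assume X: "finite X" "X \<subseteq> Tl \<rho>"
    have cz: "continuous_on (cball 0 \<rho>) (\<lambda>y. zterm y w)" if "w \<in> X" for w
    proof (rule continuous_at_imp_continuous_on, rule ballI)
      fix y :: complex assume "y \<in> cball 0 \<rho>"
      then have "y \<noteq> w" "w \<noteq> 0" using nz[of y w] that X by auto
      then show "isCont (\<lambda>y. zterm y w) y" using zterm_deriv DERIV_isCont by blast
    qed
    show "continuous_on (cball 0 \<rho>) (f X)" unfolding f_def
      by (intro continuous_on_sum cz)
    fix y :: complex assume y: "y \<in> ball 0 \<rho>"
    show "(f X has_field_derivative f' X y) (at y)" unfolding f_def f'_def
    proof (intro DERIV_sum zterm_deriv)
      fix w assume "w \<in> X"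
      then show "y \<noteq> w" "w \<noteq> 0" using nz[of y w] X y by auto
    qed
  qed
  have ul: "uniform_limit (cball 0 \<rho>) f (ZT \<rho>) F"
    unfolding F_def f_def ZT_def
  proof (rule Weierstrass_m_test_general'[where M = "\<lambda>w. 2 * \<rho>^2 * (1 / norm w ^ 3)"])
    fix w y :: complex assume w: "w \<in> Tl \<rho>" and y: "y \<in> cball 0 \<rho>"
    have "norm (zterm y w) \<le> 2 * norm y ^ 2 / norm w ^ 3" using nz[OF y w] by (intro zterm_bound) auto
    also have "\<dots> \<le> 2 * \<rho> ^ 2 / norm w ^ 3"
      using y by (intro divide_right_mono mult_left_mono power_mono) auto
    finally show "norm (zterm y w) \<le> 2 * \<rho>^2 * (1 / norm w ^ 3)" by simp
  next
    fix y :: complex show "(zterm y has_sum infsum (zterm y) (Tl \<rho>)) (Tl \<rho>)"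
      by (intro has_sum_infsum summable_on_subset[OF zterm_summable Tl_sub])
  next
    show "(\<lambda>w. 2 * \<rho>^2 * (1 / norm w ^ 3)) summable_on Tl \<rho>"
      by (intro summable_on_cmult_right summable_on_subset[OF summ3 Tl_sub])
  qed
  have Fnt: "\<not> trivial_limit F" by (simp add: F_def)
  obtain g' where g': "\<And>y. y \<in> ball 0 \<rho> \<Longrightarrow> (ZT \<rho> has_field_derivative g' y) (at y) \<and> ((\<lambda>X. f' X y) \<longlongrightarrow> g' y) F"
    using has_complex_derivative_uniform_limit[OF ev ul Fnt r] by metis
  have "((\<lambda>w. - pterm y w) has_sum - PT \<rho> y) (Tl \<rho>)"
    unfolding PT_def has_sum_uminus
    by (simp add: summable_on_subset[OF pterm_summable Tl_sub])
  then have "((\<lambda>X. f' X y) \<longlongrightarrow> - PT \<rho> y) F" by (simp add: has_sum_def f'_def F_def)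
  then have "g' y = - PT \<rho> y" using g'[OF y] Fnt tendsto_unique by blast
  then show ?thesis using g'[OF y] by simp
qed

lemma PT_holo: assumes "\<rho> > 0" shows "PT \<rho> holomorphic_on ball 0 \<rho>"
proof -
  have h: "ZT \<rho> holomorphic_on ball 0 \<rho>"
    unfolding holomorphic_on_open[OF open_ball] using tail_deriv[OF assms] by blast
  have "(\<lambda>y. - deriv (ZT \<rho>) y) holomorphic_on ball 0 \<rho>"
    by (intro holomorphic_intros holomorphic_deriv h) auto
  moreover have "- deriv (ZT \<rho>) y = PT \<rho> y" if "y \<in> ball 0 \<rho>" for y
    using DERIV_imp_deriv[OF tail_deriv[OF assms that]] by simp
  ultimately show ?thesis by (rule holomorphic_transform)
qed

lemma zeta_deriv:
  assumes z: "z \<notin> LL"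
  shows "(weierstrass_zeta LL has_field_derivative - weierstrass_p LL z) (at z)"
proof -
  define \<rho> where "\<rho> = norm z + 1"
  have r: "\<rho> > 0" using norm_ge_zero[of z] unfolding \<rho>_def by linarith
  have zb: "z \<in> ball 0 \<rho>" by (simp add: \<rho>_def)
  have z0: "z \<noteq> 0" using z by auto
  have eq: "weierstrass_zeta LL = (\<lambda>y. 1/y + (\<Sum>w\<in>Kl \<rho>. zterm y w) + ZT \<rho> y)"
    by (rule ext) (rule decomp_z)
  have kz: "z \<noteq> w" "w \<noteq> 0" if "w \<in> Kl \<rho>" for w using that z by (auto simp: Kl_def)
  have "((\<lambda>y. 1/y + (\<Sum>w\<in>Kl \<rho>. zterm y w) + ZT \<rho> y) has_field_derivative
       (- (1 / z^2)) + (\<Sum>w\<in>Kl \<rho>. - pterm z w) + - PT \<rho> z) (at z)"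
  proof (intro DERIV_add DERIV_sum zterm_deriv tail_deriv[OF r zb] kz)
    show "((\<lambda>y. 1 / y) has_field_derivative - (1 / z\<^sup>2)) (at z)"
      using z0 by (auto intro!: derivative_eq_intros simp: power2_eq_square field_simps)
  qed
  also have "(- (1 / z^2)) + (\<Sum>w\<in>Kl \<rho>. - pterm z w) + - PT \<rho> z = - weierstrass_p LL z"
    by (simp add: decomp_p[of z \<rho>] sum_negf)
  finally show ?thesis unfolding eq .
qed

lemma open_compl: "open (- LL)"
proof (rule openI)
  fix z assume "z \<in> - LL"
  obtain e where e: "e > 0" "\<forall>w\<in>LL. w \<noteq> z \<longrightarrow> e \<le> dist w z" using lat_discrete by blast
  have "ball z e \<subseteq> - LL"
  proof
    fix y assume "y \<in> ball z e"
    then show "y \<in> - LL" using e \<open>z \<in> - LL\<close> by (auto simp: dist_commute)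
  qed
  then show "\<exists>e>0. ball z e \<subseteq> - LL" using e by blast
qed

lemma zeta_holo: "weierstrass_zeta LL holomorphic_on (- LL)"
  using zeta_deriv open_compl by (auto simp: holomorphic_on_open)

lemma wp_holo: "weierstrass_p LL holomorphic_on (- LL)"
proof -
  have "(\<lambda>y. - deriv (weierstrass_zeta LL) y) holomorphic_on (- LL)"
    by (intro holomorphic_intros holomorphic_deriv zeta_holo open_compl)
  moreover have "- deriv (weierstrass_zeta LL) y = weierstrass_p LL y" if "y \<in> - LL" for y
    using DERIV_imp_deriv[OF zeta_deriv] that by simp
  ultimately show ?thesis by (rule holomorphic_transform)
qed

end




context wlat begin

lemma zeta0: "weierstrass_zeta LL 0 = 0"
proof -
  have "zterm 0 = (\<lambda>_. 0)" by (rule ext) (simp add: zterm_def)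
  then show ?thesis by (simp add: wz_eq)
qed

lemma r_deriv0: "((\<lambda>y. weierstrass_zeta LL y - 1/y) has_field_derivative 0) (at 0)"
proof -
  have eq: "(\<lambda>y. weierstrass_zeta LL y - 1/y) = (\<lambda>y. (\<Sum>w\<in>Kl 1. zterm y w) + ZT 1 y)"
    by (rule ext) (simp add: decomp_z[of _ 1])
  have kz: "(0::complex) \<noteq> w" "w \<noteq> 0" if "w \<in> Kl 1" for w using that by (auto simp: Kl_def)
  have "((\<lambda>y. (\<Sum>w\<in>Kl 1. zterm y w) + ZT 1 y) has_field_derivative (\<Sum>w\<in>Kl 1. - pterm 0 w) + - PT 1 0) (at 0)"
    by (intro DERIV_add DERIV_sum zterm_deriv tail_deriv kz) auto
  moreover have "pterm 0 = (\<lambda>_. 0)" by (rule ext) (simp add: pterm_def)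
  ultimately show ?thesis unfolding eq by (simp add: PT_def)
qed

lemma r0: "weierstrass_zeta LL 0 - 1/0 = 0" by (simp add: zeta0)

lemma p_lim0: "((\<lambda>y. weierstrass_p LL y - 1/y^2) \<longlongrightarrow> 0) (at 0)"
proof -
  have eq: "(\<lambda>y. weierstrass_p LL y - 1/y^2) = (\<lambda>y. (\<Sum>w\<in>Kl 1. pterm y w) + PT 1 y)"
    by (rule ext) (simp add: decomp_p[of _ 1])
  have c1: "isCont (\<lambda>y. pterm y w) 0" if "w \<in> Kl 1" for w
    using that unfolding pterm_def by (intro continuous_intros) (auto simp: Kl_def)
  have c2: "isCont (PT 1) 0"
  proof -
    have "continuous_on (ball 0 1) (PT 1)" by (intro holomorphic_on_imp_continuous_on PT_holo) auto
    then show ?thesis by (rule continuous_on_interior) auto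
  qed
  have "isCont (\<lambda>y. (\<Sum>w\<in>Kl 1. pterm y w) + PT 1 y) 0"
    by (intro continuous_intros c1 c2)
  then have "((\<lambda>y. (\<Sum>w\<in>Kl 1. pterm y w) + PT 1 y) \<longlongrightarrow> (\<Sum>w\<in>Kl 1. pterm 0 w) + PT 1 0) (at 0)"
    by (simp add: isCont_def)
  moreover have "pterm 0 = (\<lambda>_. 0)" by (rule ext) (simp add: pterm_def)
  ultimately show ?thesis unfolding eq by (simp add: PT_def)
qed

lemma neg_image: "uminus ` (LL - {0}) = LL - {0}"
proof
  show "uminus ` (LL - {0}) \<subseteq> LL - {0}" by auto
  show "LL - {0} \<subseteq> uminus ` (LL - {0})"
  proof
    fix x assume "x \<in> LL - {0}"
    then have "- x \<in> LL - {0}" by auto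
    then show "x \<in> uminus ` (LL - {0})" by (rule image_eqI[rotated]) simp
  qed
qed

lemma wp_even: "weierstrass_p LL (- z) = weierstrass_p LL z"
proof -
  have "infsum (pterm z) (LL - {0}) = infsum (pterm z) (uminus ` (LL - {0}))" by (simp only: neg_image)
  also have "\<dots> = infsum (pterm z \<circ> uminus) (LL - {0})" by (rule infsum_reindex) simp
  also have "\<dots> = infsum (pterm (-z)) (LL - {0})"
  proof (rule infsum_cong)
    fix w have "(-z-w)^2 = (z+w)^2" by (simp add: power2_eq_square algebra_simps)
    then show "(pterm z \<circ> uminus) w = pterm (-z) w" by (simp add: pterm_def)
  qed
  finally show ?thesis by (simp add: wp_eq)
qed

lemma wz_odd: "weierstrass_zeta LL (- z) = - weierstrass_zeta LL z"
proof -
  have "infsum (zterm z) (LL - {0}) = infsum (zterm z) (uminus ` (LL - {0}))" by (simp only: neg_image)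
  also have "\<dots> = infsum (zterm z \<circ> uminus) (LL - {0})" by (rule infsum_reindex) simp
  also have "\<dots> = infsum (\<lambda>w. - zterm (-z) w) (LL - {0})"
  proof (rule infsum_cong)
    fix w have "1 / (- z - w) = 1 / (- (z + w))" by (rule arg_cong[where f="\<lambda>x. 1/x"]) simp
    also have "\<dots> = - (1 / (z + w))" by (rule divide_minus_right)
    finally have "1 / (- z - w) = - (1 / (z + w))" .
    then show "(zterm z \<circ> uminus) w = - zterm (-z) w" by (simp add: zterm_def)
  qed
  also have "\<dots> = - infsum (zterm (-z)) (LL - {0})" by (rule infsum_uminus)
  finally show ?thesis by (simp add: wz_eq)
qed

definition pfull :: "complex \<Rightarrow> complex \<Rightarrow> complex" where
  "pfull z w = 1/(z-w)^2 - (if w = 0 then 0 else 1/w^2)"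
definition zfull :: "complex \<Rightarrow> complex \<Rightarrow> complex" where
  "zfull z w = 1/(z-w) + (if w = 0 then 0 else 1/w + z/w^2)"

lemma LL_insert: "insert 0 (LL - {0}) = LL" by auto

lemma pfull_has_sum: "(pfull z has_sum weierstrass_p LL z) LL"
proof -
  have "(pterm z has_sum infsum (pterm z) (LL - {0})) (LL - {0})" by (rule has_sum_infsum[OF pterm_summable])
  then have "(pfull z has_sum infsum (pterm z) (LL - {0})) (LL - {0})"
    by (rule has_sum_cong[THEN iffD1, rotated]) (simp add: pfull_def pterm_def)
  from has_sum_insert[OF _ this, of 0] show ?thesis
    by (simp add: insert_absorb wp_eq pfull_def)
qed

lemma zfull_has_sum: "(zfull z has_sum weierstrass_zeta LL z) LL"
proof -
  have "(zterm z has_sum infsum (zterm z) (LL - {0})) (LL - {0})" by (rule has_sum_infsum[OF zterm_summable])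
  then have "(zfull z has_sum infsum (zterm z) (LL - {0})) (LL - {0})"
    by (rule has_sum_cong[THEN iffD1, rotated]) (simp add: zfull_def zterm_def)
  from has_sum_insert[OF _ this, of 0] show ?thesis
    by (simp add: insert_absorb wz_eq zfull_def)
qed

lemma shift_image: assumes "\<omega> \<in> LL" shows "(\<lambda>u. u + \<omega>) ` LL = LL"
proof
  show "(\<lambda>u. u + \<omega>) ` LL \<subseteq> LL" using assms lat_add by auto
  show "LL \<subseteq> (\<lambda>u. u + \<omega>) ` LL"
  proof
    fix x assume "x \<in> LL"
    then have "x - \<omega> \<in> LL" using assms lat_diff by auto
    then show "x \<in> (\<lambda>u. u + \<omega>) ` LL" by (rule image_eqI[rotated]) simp
  qed
qed

lemma has_sum_shift:
  assumes "\<omega> \<in> LL" "(f has_sum S) LL" shows "((\<lambda>u. f (u + \<omega>)) has_sum S) LL"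
proof -
  have "(f has_sum S) ((\<lambda>u. u + \<omega>) ` LL)" using assms by (simp add: shift_image)
  then have "((f \<circ> (\<lambda>u. u + \<omega>)) has_sum S) LL" by (subst (asm) has_sum_reindex) (auto simp: inj_on_def)
  then show ?thesis by (simp add: o_def)
qed

definition dd :: "complex \<Rightarrow> complex \<Rightarrow> complex" where
  "dd \<omega> u = (if u = 0 then 0 else 1/u^2) - (if u + \<omega> = 0 then 0 else 1/(u+\<omega>)^2)"

lemma wp_diff_has_sum:
  assumes "\<omega> \<in> LL" shows "(dd \<omega> has_sum (weierstrass_p LL (z + \<omega>) - weierstrass_p LL z)) LL"
proof -
  have "((\<lambda>u. pfull (z + \<omega>) (u + \<omega>) - pfull z u) has_sum (weierstrass_p LL (z + \<omega>) - weierstrass_p LL z)) LL"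
    by (intro has_sum_diff' has_sum_shift assms pfull_has_sum)
  then show ?thesis
    by (rule has_sum_cong[THEN iffD1, rotated]) (simp add: pfull_def dd_def)
qed

lemma wp_periodic: assumes "\<omega> \<in> LL" shows "weierstrass_p LL (z + \<omega>) = weierstrass_p LL z"
proof -
  have "weierstrass_p LL (z + \<omega>) - weierstrass_p LL z = weierstrass_p LL (- \<omega>/2 + \<omega>) - weierstrass_p LL (- \<omega>/2)"
    using has_sum_unique[OF wp_diff_has_sum[OF assms, of z] wp_diff_has_sum[OF assms, of "- \<omega>/2"]] .
  also have "- \<omega>/2 + \<omega> = - (- \<omega>/2)" by simp
  also have "weierstrass_p LL (- (- \<omega>/2)) - weierstrass_p LL (- \<omega>/2) = 0" by (simp only: wp_even) simp
  finally show ?thesis by simp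
qed

lemma dd_has_sum0: assumes "\<omega> \<in> LL" shows "(dd \<omega> has_sum 0) LL"
  using wp_diff_has_sum[OF assms, of 0] wp_periodic[OF assms, of 0] by simp

lemma e_id: "(zfull (z+\<omega>) (u+\<omega>) - zfull z u) - (zfull (0+\<omega>) (u+\<omega>) - zfull 0 u) = - z * dd \<omega> u"
proof -
  define A where "A = (if u+\<omega> = 0 then 0 else 1/(u+\<omega>))"
  define B where "B = (if u+\<omega> = 0 then 0 else 1/(u+\<omega>)^2)"
  define C where "C = (if u = 0 then 0 else 1/u)"
  define D where "D = (if u = 0 then 0 else 1/u^2)"
  have 1: "zfull (z+\<omega>) (u+\<omega>) = 1/(z-u) + A + (z+\<omega>)*B"
  proof (cases "u+\<omega>=0")
    case True
    then have "\<omega> = - u" using add_eq_0_iff[of u \<omega>] by simp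
    then show ?thesis using True by (simp add: zfull_def A_def B_def)
  qed (simp add: zfull_def A_def B_def)
  have 2: "zfull z u = 1/(z-u) + C + z*D" by (cases "u=0") (simp_all add: zfull_def C_def D_def)
  have 3: "zfull (0+\<omega>) (u+\<omega>) = 1/(-u) + A + \<omega>*B"
  proof (cases "u+\<omega>=0")
    case True
    then have "\<omega> = - u" using add_eq_0_iff[of u \<omega>] by simp
    then show ?thesis using True by (simp add: zfull_def A_def B_def)
  qed (simp add: zfull_def A_def B_def)
  have 4: "zfull 0 u = 1/(-u) + C" by (cases "u=0") (simp_all add: zfull_def C_def)
  have 5: "dd \<omega> u = D - B" by (simp add: dd_def B_def D_def)
  show ?thesis unfolding 1 2 3 4 5 by (simp add: algebra_simps)
qed

lemma wz_quasi: assumes "\<omega> \<in> LL" shows "weierstrass_zeta LL (z + \<omega>) = weierstrass_zeta LL z + weierstrass_zeta LL \<omega>"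
proof -
  define e where "e z u = zfull (z + \<omega>) (u + \<omega>) - zfull z u" for z u
  have he: "(e z has_sum (weierstrass_zeta LL (z + \<omega>) - weierstrass_zeta LL z)) LL" for z
    unfolding e_def by (intro has_sum_diff' has_sum_shift assms zfull_has_sum)
  have "((\<lambda>u. e z u - e 0 u) has_sum ((weierstrass_zeta LL (z + \<omega>) - weierstrass_zeta LL z)
        - (weierstrass_zeta LL (0 + \<omega>) - weierstrass_zeta LL 0))) LL"
    by (intro has_sum_diff' he)
  moreover have "((\<lambda>u. e z u - e 0 u) has_sum (- z * 0)) LL"
  proof -
    have "((\<lambda>u. - z * dd \<omega> u) has_sum (- z * 0)) LL" by (intro has_sum_cmult_right dd_has_sum0 assms)
    then show ?thesis
    proof (rule has_sum_cong[THEN iffD1, rotated])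
      fix u show "- z * dd \<omega> u = e z u - e 0 u"
        unfolding e_def by (rule e_id[symmetric])
    qed
  qed
  ultimately have "(weierstrass_zeta LL (z + \<omega>) - weierstrass_zeta LL z)
        - (weierstrass_zeta LL (0 + \<omega>) - weierstrass_zeta LL 0) = - z * 0"
    by (rule has_sum_unique)
  then have "weierstrass_zeta LL (z + \<omega>) - weierstrass_zeta LL z = weierstrass_zeta LL \<omega>"
    by (simp add: zeta0)
  then show ?thesis by (simp add: algebra_simps)
qed

end




context wlat begin

abbreviation ZZ where "ZZ \<equiv> weierstrass_zeta LL"
abbreviation PP where "PP \<equiv> weierstrass_p LL"

definition fw :: "complex \<Rightarrow> complex \<Rightarrow> complex" where
  "fw w z = (ZZ z + ZZ w - ZZ (z + w))^2 - PP z - PP w - PP (z + w)"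

lemma fw_lim0:
  assumes w: "w \<notin> LL"
  shows "(fw w \<longlongrightarrow> 0) (at 0)"
proof -
  define r where "r y = ZZ y - 1/y" for y
  define p where "p y = PP y - 1/y^2" for y
  define s where "s y = ZZ w - ZZ (y + w)" for y
  have L1: "((\<lambda>y. r y / y) \<longlongrightarrow> 0) (at 0)"
    using r_deriv0 r0 unfolding has_field_derivative_iff r_def by simp
  have L2: "((\<lambda>y. s y / y) \<longlongrightarrow> PP w) (at 0)"
  proof -
    have "((\<lambda>h. (ZZ (w + h) - ZZ w) / h) \<longlongrightarrow> - PP w) (at 0)"
      using DERIV_D[OF zeta_deriv[OF w]] .
    then have "((\<lambda>h. - ((ZZ (w + h) - ZZ w) / h)) \<longlongrightarrow> - (- PP w)) (at 0)"
      by (rule tendsto_minus)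
    then show ?thesis by (simp add: s_def add.commute minus_divide_left)
  qed
  have L3: "(r \<longlongrightarrow> 0) (at 0)"
  proof -
    have "isCont r 0" unfolding r_def using DERIV_isCont[OF r_deriv0] .
    then show ?thesis using r0 by (simp add: isCont_def r_def)
  qed
  have ev: "eventually (\<lambda>y. y \<noteq> 0) (at (0::complex))" by (simp add: eventually_at_filter)
  have L4: "(s \<longlongrightarrow> 0) (at 0)"
  proof -
    have "((\<lambda>y. s y / y * y) \<longlongrightarrow> PP w * 0) (at 0)"
      by (intro tendsto_mult L2 tendsto_ident_at[THEN tendsto_eq_rhs]) simp
    then have "((\<lambda>y. s y / y * y) \<longlongrightarrow> 0) (at 0)" by simp
    moreover have "eventually (\<lambda>y. s y / y * y = s y) (at 0)" using ev by (rule eventually_mono) simp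
    ultimately show ?thesis by (rule Lim_transform_eventually)
  qed
  have L5: "(p \<longlongrightarrow> 0) (at 0)" unfolding p_def by (rule p_lim0)
  have L6: "((\<lambda>y. PP (y + w)) \<longlongrightarrow> PP w) (at 0)"
  proof -
    have c: "isCont PP w"
      using holomorphic_on_imp_continuous_on[OF wp_holo] open_compl w
      by (simp add: continuous_on_eq_continuous_at)
    have "isCont (\<lambda>y. PP (y + w)) 0" by (rule isCont_o2) (use c in \<open>auto intro!: continuous_intros\<close>)
    then show ?thesis by (simp add: isCont_def)
  qed
  have lim: "((\<lambda>y. 2 * (r y / y + s y / y) + (r y + s y)^2 - p y - PP w - PP (y + w)) \<longlongrightarrow>
      2 * (0 + PP w) + (0 + 0)^2 - 0 - PP w - PP w) (at 0)"
    by (intro tendsto_intros L1 L2 L3 L4 L5 L6)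
  have "eventually (\<lambda>y. 2 * (r y / y + s y / y) + (r y + s y)^2 - p y - PP w - PP (y + w) = fw w y) (at 0)"
    using ev
  proof (rule eventually_mono)
    fix y :: complex assume y: "y \<noteq> 0"
    have e1: "ZZ y + ZZ w - ZZ (y + w) = 1/y + (r y + s y)" by (simp add: r_def s_def)
    have e2: "PP y = 1/y^2 + p y" by (simp add: p_def)
    have e3: "(1/y + q)^2 - (1/y^2 + p y) = 2*(q/y) + q^2 - p y" for q
      using y by (simp add: power2_eq_square field_simps)
    have "fw w y = (1/y + (r y + s y))^2 - (1/y^2 + p y) - PP w - PP (y + w)"
      unfolding fw_def e1 e2 ..
    also have "\<dots> = 2*((r y + s y)/y) + (r y + s y)^2 - p y - PP w - PP (y + w)"
      by (simp only: e3)
    also have "\<dots> = 2 * (r y / y + s y / y) + (r y + s y)^2 - p y - PP w - PP (y + w)"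
      by (simp add: add_divide_distrib)
    finally show "2 * (r y / y + s y / y) + (r y + s y)^2 - p y - PP w - PP (y + w) = fw w y" by simp
  qed
  from Lim_transform_eventually[OF lim this] show ?thesis by simp
qed

lemma fw_sym: "fw w z = fw (- w) (z + w)"
proof -
  have a: "z + w + - w = z" by simp
  have sq: "(ZZ (z + w) + - ZZ w - ZZ z)^2 = (ZZ z + ZZ w - ZZ (z + w))^2"
    by (simp add: power2_eq_square algebra_simps)
  show ?thesis unfolding fw_def a wz_odd wp_even sq by (simp add: algebra_simps)
qed

lemma fw_periodic: assumes "\<omega> \<in> LL" shows "fw w (z + \<omega>) = fw w z"
proof -
  have e: "z + \<omega> + w = (z + w) + \<omega>" by (simp add: algebra_simps)
  show ?thesis unfolding fw_def e
    by (simp add: wz_quasi[OF assms] wp_periodic[OF assms] diff_add_eq add_diff_eq)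
qed

lemma fw_lim_lat:
  assumes w: "w \<notin> LL" and z0: "z0 \<in> LL"
  shows "(fw w \<longlongrightarrow> 0) (at z0)"
proof -
  have "((\<lambda>x. fw w (x + - z0)) \<longlongrightarrow> 0) (at (0 - - z0))" by (rule LIM_offset[OF fw_lim0[OF w]])
  moreover have "fw w (x + - z0) = fw w x" for x
    using fw_periodic[OF z0, of w "x + - z0"] by simp
  ultimately show ?thesis by simp
qed

lemma fw_lim_shift:
  assumes w: "w \<notin> LL" and z0: "z0 + w \<in> LL"
  shows "(fw w \<longlongrightarrow> 0) (at z0)"
proof -
  have w': "- w \<notin> LL" using w by simp
  have "((\<lambda>x. fw (- w) (x + w)) \<longlongrightarrow> 0) (at (z0 + w - w))" by (rule LIM_offset[OF fw_lim_lat[OF w' z0]])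
  then show ?thesis by (simp add: fw_sym[symmetric])
qed

lemma open_U: "open {z. z \<notin> LL \<and> z + w \<notin> LL}"
proof -
  have "open ((\<lambda>z. z + w) -` (- LL))" by (rule continuous_open_vimage[OF open_compl]) (intro continuous_intros)
  then have "open (- LL \<inter> (\<lambda>z. z + w) -` (- LL))" using open_compl by blast
  moreover have "- LL \<inter> (\<lambda>z. z + w) -` (- LL) = {z. z \<notin> LL \<and> z + w \<notin> LL}" by auto
  ultimately show ?thesis by simp
qed

lemma fw_holo: "fw w holomorphic_on {z. z \<notin> LL \<and> z + w \<notin> LL}"
proof -
  define U where "U = {z. z \<notin> LL \<and> z + w \<notin> LL}"
  have hz: "ZZ holomorphic_on U" by (rule holomorphic_on_subset[OF zeta_holo]) (auto simp: U_def)
  have hp: "PP holomorphic_on U" by (rule holomorphic_on_subset[OF wp_holo]) (auto simp: U_def)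
  have hz2: "(\<lambda>z. ZZ (z + w)) holomorphic_on U"
  proof -
    have "(ZZ \<circ> (\<lambda>z. z + w)) holomorphic_on U"
      by (rule holomorphic_on_compose_gen[OF _ zeta_holo]) (auto simp: U_def intro!: holomorphic_intros)
    then show ?thesis by (simp add: o_def)
  qed
  have hp2: "(\<lambda>z. PP (z + w)) holomorphic_on U"
  proof -
    have "(PP \<circ> (\<lambda>z. z + w)) holomorphic_on U"
      by (rule holomorphic_on_compose_gen[OF _ wp_holo]) (auto simp: U_def intro!: holomorphic_intros)
    then show ?thesis by (simp add: o_def)
  qed
  have "(\<lambda>z. (ZZ z + ZZ w - ZZ (z + w))^2 - PP z - PP w - PP (z + w)) holomorphic_on U"
    by (intro holomorphic_intros hz hp hz2 hp2)
  then show ?thesis unfolding U_def fw_def[abs_def] .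
qed

end




context wlat begin

lemma coords: "\<exists>a b::real. z = of_real a * \<omega>1 + of_real b * \<omega>2"
proof -
  define \<tau> where "\<tau> = \<omega>2 / \<omega>1"
  define q where "q = z / \<omega>1"
  define b where "b = Im q / Im \<tau>"
  define a where "a = Re q - b * Re \<tau>"
  have it: "Im \<tau> \<noteq> 0" using indep by (simp add: \<tau>_def)
  have "of_real a + of_real b * \<tau> = q"
    using it by (simp add: complex_eq_iff a_def b_def)
  then have "z = \<omega>1 * (of_real a + of_real b * \<tau>)" using om1_nz by (simp add: q_def)
  also have "\<dots> = of_real a * \<omega>1 + of_real b * \<omega>2" using om1_nz by (simp add: \<tau>_def field_simps)
  finally show ?thesis by blast
qed

lemma fw_zero:
  assumes w: "w \<notin> LL" and z: "z \<notin> LL" and zw: "z + w \<notin> LL"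
  shows "fw w z = 0"
proof -
  define B where "B = {z. z \<in> LL \<or> z + w \<in> LL}"
  define F where "F z = (if z \<in> B then 0 else fw w z)" for z
  have lim: "(fw w \<longlongrightarrow> 0) (at z0)" if "z0 \<in> B" for z0
    using that fw_lim_lat[OF w] fw_lim_shift[OF w] by (auto simp: B_def)
  have disc: "\<exists>e>0. \<forall>b\<in>B. b \<noteq> z0 \<longrightarrow> e \<le> dist b z0" for z0
  proof -
    obtain e1 where e1: "e1 > 0" "\<forall>x\<in>LL. x \<noteq> z0 \<longrightarrow> e1 \<le> dist x z0" using lat_discrete by blast
    obtain e2 where e2: "e2 > 0" "\<forall>x\<in>LL. x \<noteq> z0 + w \<longrightarrow> e2 \<le> dist x (z0 + w)" using lat_discrete by blast
    show ?thesis
    proof (intro exI[of _ "min e1 e2"] conjI ballI impI)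
      fix b assume b: "b \<in> B" "b \<noteq> z0"
      show "min e1 e2 \<le> dist b z0"
      proof (cases "b \<in> LL")
        case True
        then have "e1 \<le> dist b z0" using e1 b by blast
        then show ?thesis by simp
      next
        case False
        then have "b + w \<in> LL" using b by (auto simp: B_def)
        moreover have "b + w \<noteq> z0 + w" using b by simp
        ultimately have "e2 \<le> dist (b + w) (z0 + w)" using e2 by blast
        also have "dist (b + w) (z0 + w) = dist b z0" by (simp add: dist_norm)
        finally show ?thesis by simp
      qed
    qed (use e1 e2 in auto)
  qed
  have holo: "F holomorphic_on UNIV"
  proof -
    have "F analytic_on UNIV"
      unfolding analytic_on_def
    proof
      fix z0 :: complex
      obtain e where e: "e > 0" "\<forall>b\<in>B. b \<noteq> z0 \<longrightarrow> e \<le> dist b z0" using disc by blast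
      have nB: "y \<notin> B" if "y \<in> ball z0 e - {z0}" for y
      proof
        assume "y \<in> B"
        then have "e \<le> dist y z0" using e that by auto
        then show False using that by (simp add: dist_commute)
      qed
      have h1: "F holomorphic_on (ball z0 e - {z0})"
      proof (rule holomorphic_transform[where f = "fw w"])
        show "fw w holomorphic_on (ball z0 e - {z0})"
          by (rule holomorphic_on_subset[OF fw_holo]) (use nB in \<open>auto simp: B_def\<close>)
        fix y assume "y \<in> ball z0 e - {z0}" then show "fw w y = F y" using nB by (simp add: F_def)
      qed
      have c: "(F \<longlongrightarrow> F z0) (at z0 within ball z0 e)"
      proof -
        have "eventually (\<lambda>y. y \<in> ball z0 e - {z0}) (at z0)"
          by (rule eventually_at_in_open) (use e(1) in auto)
        then have ev: "eventually (\<lambda>y. fw w y = F y) (at z0)"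
        proof (rule eventually_mono)
          fix y assume "y \<in> ball z0 e - {z0}"
          then show "fw w y = F y" using nB by (simp add: F_def)
        qed
        have "(fw w \<longlongrightarrow> F z0) (at z0)"
        proof (cases "z0 \<in> B")
          case True then show ?thesis using lim by (simp add: F_def)
        next
          case False
          then have "z0 \<in> {z. z \<notin> LL \<and> z + w \<notin> LL}" by (auto simp: B_def)
          then have "isCont (fw w) z0"
            using holomorphic_on_imp_continuous_on[OF fw_holo] open_U continuous_on_eq_continuous_at by blast
          then show ?thesis using False by (simp add: isCont_def F_def)
        qed
        then have "(F \<longlongrightarrow> F z0) (at z0)" using ev by (rule Lim_transform_eventually)
        then show ?thesis by (rule tendsto_within_subset) simp
      qed
      have "F holomorphic_on ball z0 e"
        by (rule no_isolated_singularity'[where K = "{z0}"]) (use c h1 in auto)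
      then show "\<exists>e>0. F holomorphic_on ball z0 e" using e(1) by blast
    qed
    then show ?thesis by (rule analytic_imp_holomorphic)
  qed
  have per: "F (y + \<omega>) = F y" if "\<omega> \<in> LL" for y \<omega>
  proof -
    have e: "y + \<omega> + w = (y + w) + \<omega>" by (simp add: algebra_simps)
    have "y + \<omega> \<in> B \<longleftrightarrow> y \<in> B" unfolding B_def using lat_add_iff1[OF that] by (simp add: e)
    then show ?thesis by (simp add: F_def fw_periodic[OF that])
  qed
  have bnd: "bounded (range F)"
  proof -
    define g where "g = (\<lambda>p::real \<times> real. of_real (fst p) * \<omega>1 + of_real (snd p) * \<omega>2)"
    define P where "P = g ` ({0..1} \<times> {0..1})"
    have "continuous_on UNIV g" unfolding g_def by (intro continuous_intros)
    then have "compact P" unfolding P_def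
      by (intro compact_continuous_image compact_Times compact_Icc) (auto intro: continuous_on_subset)
    have cF: "continuous_on UNIV F" using holomorphic_on_imp_continuous_on[OF holo] .
    have "compact (F ` P)" by (rule compact_continuous_image[OF continuous_on_subset[OF cF] \<open>compact P\<close>]) auto
    then have bFP: "bounded (F ` P)" by (rule compact_imp_bounded)
    have "range F \<subseteq> F ` P"
    proof
      fix v assume "v \<in> range F" then obtain z where v: "v = F z" by auto
      obtain a b :: real where zab: "z = of_real a * \<omega>1 + of_real b * \<omega>2" using coords by blast
      define z' where "z' = of_real (a - of_int \<lfloor>a\<rfloor>) * \<omega>1 + of_real (b - of_int \<lfloor>b\<rfloor>) * \<omega>2"
      define \<omega> where "\<omega> = of_int \<lfloor>a\<rfloor> * \<omega>1 + of_int \<lfloor>b\<rfloor> * \<omega>2"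
      have "z = z' + \<omega>" by (simp add: zab z'_def \<omega>_def algebra_simps)
      then have "F z = F z'" using per[of \<omega> z'] lat_int by (simp add: \<omega>_def)
      moreover have "z' \<in> P" unfolding P_def
      proof (rule image_eqI[where x = "(a - of_int \<lfloor>a\<rfloor>, b - of_int \<lfloor>b\<rfloor>)"])
        show "z' = g (a - of_int \<lfloor>a\<rfloor>, b - of_int \<lfloor>b\<rfloor>)" by (simp add: g_def z'_def)
        have "0 \<le> a - of_int \<lfloor>a\<rfloor>" "a - of_int \<lfloor>a\<rfloor> \<le> 1" "0 \<le> b - of_int \<lfloor>b\<rfloor>" "b - of_int \<lfloor>b\<rfloor> \<le> 1"
          by linarith+
        then show "(a - of_int \<lfloor>a\<rfloor>, b - of_int \<lfloor>b\<rfloor>) \<in> {0..1} \<times> {0..1}" by simp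
      qed
      ultimately show "v \<in> F ` P" using v by blast
    qed
    then show ?thesis using bFP bounded_subset by blast
  qed
  obtain c where c: "\<forall>x\<in>UNIV. F x = c" using Liouville_theorem[OF holo bnd] by (auto simp: constant_on_def)
  then have "F z = F 0" by simp
  also have "F 0 = 0" by (simp add: F_def B_def)
  finally show ?thesis using z zw by (simp add: F_def B_def)
qed

lemma addition_thm:
  assumes "a \<notin> LL" "b \<notin> LL" "a + b \<notin> LL"
  shows "(ZZ a + ZZ b - ZZ (a + b))^2 = PP a + PP b + PP (a + b)"
  using fw_zero[OF assms(2) assms(1) assms(3)] unfolding fw_def by (simp add: algebra_simps)

end





lemma alg1: "(x::complex) * (- z) + y * (- x) + z * (- y) = (x^2 + y^2 + z^2 - (x+y+z)^2)/2"
  by (simp add: power2_eq_square field_simps)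

lemma cyc_sum:
  fixes f :: "nat \<Rightarrow> nat \<Rightarrow> nat \<Rightarrow> 'a::comm_monoid_add"
  shows "(\<Sum>i\<in>N. \<Sum>j\<in>N. \<Sum>k\<in>N. f j k i) = (\<Sum>i\<in>N. \<Sum>j\<in>N. \<Sum>k\<in>N. f i j k)"
proof -
  have "(\<Sum>i\<in>N. \<Sum>j\<in>N. \<Sum>k\<in>N. f j k i) = (\<Sum>j\<in>N. \<Sum>i\<in>N. \<Sum>k\<in>N. f j k i)"
    by (rule sum.swap)
  also have "\<dots> = (\<Sum>j\<in>N. \<Sum>k\<in>N. \<Sum>i\<in>N. f j k i)"
    by (rule sum.cong[OF refl], rule sum.swap)
  finally show ?thesis .
qed

lemma cyc_sum_eq:
  fixes f g :: "nat \<Rightarrow> nat \<Rightarrow> nat \<Rightarrow> complex"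
  assumes "\<And>i j k. i \<in> N \<Longrightarrow> j \<in> N \<Longrightarrow> k \<in> N \<Longrightarrow>
     f i j k + f j k i + f k i j = g i j k + g j k i + g k i j"
  shows "(\<Sum>i\<in>N. \<Sum>j\<in>N. \<Sum>k\<in>N. f i j k) = (\<Sum>i\<in>N. \<Sum>j\<in>N. \<Sum>k\<in>N. g i j k)"
proof -
  have f3: "3 * (\<Sum>i\<in>N. \<Sum>j\<in>N. \<Sum>k\<in>N. f i j k) =
     (\<Sum>i\<in>N. \<Sum>j\<in>N. \<Sum>k\<in>N. f i j k + f j k i + f k i j)" for f :: "nat \<Rightarrow> nat \<Rightarrow> nat \<Rightarrow> complex"
  proof -
    have a: "(\<Sum>i\<in>N. \<Sum>j\<in>N. \<Sum>k\<in>N. f j k i) = (\<Sum>i\<in>N. \<Sum>j\<in>N. \<Sum>k\<in>N. f i j k)"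
      by (rule cyc_sum)
    have b: "(\<Sum>i\<in>N. \<Sum>j\<in>N. \<Sum>k\<in>N. f k i j) = (\<Sum>i\<in>N. \<Sum>j\<in>N. \<Sum>k\<in>N. f i j k)"
      using cyc_sum[of "\<lambda>a b c. f b c a" N] cyc_sum[of f N] by simp
    show ?thesis using a b by (simp add: sum.distrib)
  qed
  have "3 * (\<Sum>i\<in>N. \<Sum>j\<in>N. \<Sum>k\<in>N. f i j k) = 3 * (\<Sum>i\<in>N. \<Sum>j\<in>N. \<Sum>k\<in>N. g i j k)"
    unfolding f3 using assms by (intro sum.cong refl) auto
  then show ?thesis by simp
qed

lemma comb_main:
  fixes N :: "nat set" and s :: "nat \<Rightarrow> complex" and Z P :: "nat \<Rightarrow> nat \<Rightarrow> complex"
  assumes fin: "finite N" and s2: "\<And>i. i \<in> N \<Longrightarrow> s i * s i = 1" and s0: "(\<Sum>k\<in>N. s k) = 0"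
    and Zd: "\<And>i. i \<in> N \<Longrightarrow> Z i i = 0" and Pd: "\<And>i. i \<in> N \<Longrightarrow> P i i = 0"
    and Za: "\<And>i j. i \<in> N \<Longrightarrow> j \<in> N \<Longrightarrow> Z j i = - Z i j"
    and Ps: "\<And>i j. i \<in> N \<Longrightarrow> j \<in> N \<Longrightarrow> P j i = P i j"
    and add: "\<And>i j k. i \<in> N \<Longrightarrow> j \<in> N \<Longrightarrow> k \<in> N \<Longrightarrow> i \<noteq> j \<Longrightarrow> j \<noteq> k \<Longrightarrow> i \<noteq> k \<Longrightarrow>
        (Z i j + Z j k + Z k i)^2 = P i j + P j k + P k i"
  shows "(\<Sum>i\<in>N. s i * (\<Sum>j\<in>N. s j * Z i j)^2) = (\<Sum>i\<in>N. s i * (\<Sum>j\<in>N. P i j))"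
proof -
  define D where "D i j k \<longleftrightarrow> i \<noteq> j \<and> j \<noteq> k \<and> i \<noteq> k" for i j k :: nat
  define W where "W i j k = s i * s j * s k * Z i j * Z i k" for i j k
  define Q where "Q i j = (Z i j)^2 - P i j" for i j
  define G where "G i j k = (if D i j k then s i * s j * s k * Q i j / 2 else 0)" for i j k
  have e1: "(\<Sum>i\<in>N. s i * (\<Sum>j\<in>N. s j * Z i j)^2) = (\<Sum>i\<in>N. \<Sum>j\<in>N. \<Sum>k\<in>N. W i j k)"
    by (simp add: W_def power2_eq_square sum_product sum_distrib_left mult_ac)
  have e2: "W i j k = (if D i j k then W i j k else 0) + (if j = k then s i * (Z i j)^2 else 0)"
    if "i \<in> N" "j \<in> N" "k \<in> N" for i j k
    using that s2[of j] Zd[of i] by (auto simp: D_def W_def power2_eq_square mult_ac)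
  have e3: "(\<Sum>i\<in>N. \<Sum>j\<in>N. \<Sum>k\<in>N. W i j k) =
      (\<Sum>i\<in>N. \<Sum>j\<in>N. \<Sum>k\<in>N. if D i j k then W i j k else 0) + (\<Sum>i\<in>N. \<Sum>j\<in>N. s i * (Z i j)^2)"
  proof -
    have "(\<Sum>i\<in>N. \<Sum>j\<in>N. \<Sum>k\<in>N. W i j k) = (\<Sum>i\<in>N. \<Sum>j\<in>N. \<Sum>k\<in>N.
       (if D i j k then W i j k else 0) + (if j = k then s i * (Z i j)^2 else 0))"
      using e2 by (intro sum.cong refl) auto
    also have "\<dots> = (\<Sum>i\<in>N. \<Sum>j\<in>N. \<Sum>k\<in>N. if D i j k then W i j k else 0) + (\<Sum>i\<in>N. \<Sum>j\<in>N. s i * (Z i j)^2)"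
      using fin by (simp add: sum.distrib)
    finally show ?thesis .
  qed
  have e4: "(\<Sum>i\<in>N. \<Sum>j\<in>N. \<Sum>k\<in>N. if D i j k then W i j k else 0) = (\<Sum>i\<in>N. \<Sum>j\<in>N. \<Sum>k\<in>N. G i j k)"
  proof (rule cyc_sum_eq)
    fix i j k assume ijk: "i \<in> N" "j \<in> N" "k \<in> N"
    show "(if D i j k then W i j k else 0) + (if D j k i then W j k i else 0) + (if D k i j then W k i j else 0)
        = G i j k + G j k i + G k i j"
    proof (cases "D i j k")
      case True
      then have Dc: "D j k i" "D k i j" by (auto simp: D_def)
      have A: "(Z i j + Z j k + Z k i)^2 = P i j + P j k + P k i"
        using add ijk True by (auto simp: D_def)
      have z1: "Z i k = - Z k i" "Z j i = - Z i j" "Z k j = - Z j k"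
        using Za[of k i] Za[of i j] Za[of j k] ijk by auto
      have "W i j k + W j k i + W k i j = s i * s j * s k * (Z i j * Z i k + Z j k * Z j i + Z k i * Z k j)"
        unfolding W_def by (simp add: algebra_simps)
      also have "Z i j * Z i k + Z j k * Z j i + Z k i * Z k j = ((Z i j)^2 + (Z j k)^2 + (Z k i)^2 - (Z i j + Z j k + Z k i)^2) / 2"
        unfolding z1 by (rule alg1)
      also have "\<dots> = (Q i j + Q j k + Q k i) / 2" unfolding A Q_def by simp
      finally show ?thesis using True Dc by (simp add: G_def algebra_simps add_divide_distrib)
    next
      case False
      then have Dc: "\<not> D j k i" "\<not> D k i j" by (auto simp: D_def)
      then show ?thesis using False by (simp add: G_def)
    qed
  qed
  have sk: "(\<Sum>k\<in>N. if D i j k then s k else 0) = (if i \<noteq> j then - s i - s j else 0)"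
    if "i \<in> N" "j \<in> N" for i j
  proof (cases "i = j")
    case True then show ?thesis by (simp add: D_def)
  next
    case False
    have "(\<Sum>k\<in>N. s k) = (\<Sum>k\<in>N. (if D i j k then s k else 0) + (if k = i then s k else 0) + (if k = j then s k else 0))"
      using False by (intro sum.cong refl) (auto simp: D_def)
    also have "\<dots> = (\<Sum>k\<in>N. if D i j k then s k else 0) + s i + s j"
      using fin that by (simp add: sum.distrib)
    finally show ?thesis using s0 False by (simp add: algebra_simps eq_neg_iff_add_eq_0)
  qed
  have e5: "(\<Sum>i\<in>N. \<Sum>j\<in>N. \<Sum>k\<in>N. G i j k) = (\<Sum>i\<in>N. \<Sum>j\<in>N. - (s i + s j) * Q i j / 2)"
  proof (intro sum.cong refl)
    fix i j assume ij: "i \<in> N" "j \<in> N"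
    have "(\<Sum>k\<in>N. G i j k) = s i * s j * Q i j / 2 * (\<Sum>k\<in>N. if D i j k then s k else 0)"
      by (simp add: G_def sum_distrib_left if_distrib cong: if_cong) (intro sum.cong refl, auto simp: mult_ac)
    also have "\<dots> = - (s i + s j) * Q i j / 2"
    proof (cases "i = j")
      case True then show ?thesis using ij Zd Pd by (simp add: sk Q_def)
    next
      case False
      have "s i * s j * (- s i - s j) = - (s i * s i) * s j - (s j * s j) * s i" by (simp add: algebra_simps)
      then have "s i * s j * (- s i - s j) = - (s i + s j)" using s2 ij by simp
      then show ?thesis using False ij by (simp add: sk)
    qed
    finally show "(\<Sum>k\<in>N. G i j k) = - (s i + s j) * Q i j / 2" .
  qed
  have Qs: "Q j i = Q i j" if "i \<in> N" "j \<in> N" for i j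
    using Za[of i j] Ps[of i j] that by (simp add: Q_def)
  have e6: "(\<Sum>i\<in>N. \<Sum>j\<in>N. s j * Q i j) = (\<Sum>i\<in>N. \<Sum>j\<in>N. s i * Q i j)"
  proof -
    have "(\<Sum>i\<in>N. \<Sum>j\<in>N. s j * Q i j) = (\<Sum>j\<in>N. \<Sum>i\<in>N. s j * Q i j)" by (rule sum.swap)
    also have "\<dots> = (\<Sum>j\<in>N. \<Sum>i\<in>N. s j * Q j i)" using Qs by (intro sum.cong refl) auto
    finally show ?thesis .
  qed
  have e7: "(\<Sum>i\<in>N. \<Sum>j\<in>N. - (s i + s j) * Q i j / 2) = - (\<Sum>i\<in>N. \<Sum>j\<in>N. s i * Q i j)"
  proof -
    have "(\<Sum>i\<in>N. \<Sum>j\<in>N. - (s i + s j) * Q i j / 2) = (\<Sum>i\<in>N. \<Sum>j\<in>N. (-1/2) * (s i * Q i j) + (-1/2) * (s j * Q i j))"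
      by (intro sum.cong refl) (simp add: field_simps)
    also have "\<dots> = (-1/2) * (\<Sum>i\<in>N. \<Sum>j\<in>N. s i * Q i j) + (-1/2) * (\<Sum>i\<in>N. \<Sum>j\<in>N. s j * Q i j)"
      by (simp only: sum.distrib sum_distrib_left)
    finally show ?thesis using e6 by simp
  qed
  have "(\<Sum>i\<in>N. s i * (\<Sum>j\<in>N. s j * Z i j)^2) = (\<Sum>i\<in>N. \<Sum>j\<in>N. s i * (Z i j)^2) - (\<Sum>i\<in>N. \<Sum>j\<in>N. s i * Q i j)"
    using e1 e3 e4 e5 e7 by simp
  also have "\<dots> = (\<Sum>i\<in>N. \<Sum>j\<in>N. s i * P i j)"
    by (simp add: Q_def algebra_simps sum_subtractf[symmetric])
  finally show ?thesis by (simp add: sum_distrib_left)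
qed



lemma pairsum:
  fixes P :: "nat \<Rightarrow> nat \<Rightarrow> complex" and R :: "nat \<Rightarrow> nat \<Rightarrow> bool"
  shows "(\<Sum>(i,j)\<in>{(i,j). 1 \<le> i \<and> i < j \<and> j \<le> 2*n \<and> R i j}. P i j)
     = (\<Sum>i=1..2*n. \<Sum>j=1..2*n. if i < j \<and> R i j then P i j else 0)"
proof -
  have S: "{(i,j). 1 \<le> i \<and> i < j \<and> j \<le> 2*n \<and> R i j} = {x \<in> {1..2*n} \<times> {1..2*n}. (\<lambda>(i,j). i < j \<and> R i j) x}"
    by auto
  show ?thesis unfolding S
    by (subst sum.inter_filter) (auto simp: sum.cartesian_product case_prod_unfold intro!: sum.cong)
qed

lemma comb_first:
  fixes P :: "nat \<Rightarrow> nat \<Rightarrow> complex" and n :: nat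
  assumes Pd: "\<And>i. P i i = 0"
    and Ps: "\<And>i j. i \<in> {1..2*n} \<Longrightarrow> j \<in> {1..2*n} \<Longrightarrow> P j i = P i j"
  shows "(\<Sum>i=1..2*n. (-1) ^ i * (\<Sum>j=1..2*n. P i j))
     = 2 * ((\<Sum>(i,j)\<in>{(i,j). 1 \<le> i \<and> i < j \<and> j \<le> 2*n \<and> even i \<and> even j}. P i j)
          - (\<Sum>(i,j)\<in>{(i,j). 1 \<le> i \<and> i < j \<and> j \<le> 2*n \<and> odd i \<and> odd j}. P i j))"
proof -
  define N where "N = {1..2*n}"
  define s :: "nat \<Rightarrow> complex" where "s i = (-1)^i" for i
  define c :: "nat \<Rightarrow> nat \<Rightarrow> complex" where
    "c i j = (if even i \<and> even j then 1 else if odd i \<and> odd j then -1 else 0)" for i j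
  have h1: "s i + s j = 2 * c i j" for i j
    by (cases "even i"; cases "even j") (auto simp: s_def c_def)
  have cs: "c j i = c i j" for i j by (auto simp: c_def)
  have h2: "(\<Sum>i\<in>N. \<Sum>j\<in>N. s j * P i j) = (\<Sum>i\<in>N. \<Sum>j\<in>N. s i * P i j)"
  proof -
    have "(\<Sum>i\<in>N. \<Sum>j\<in>N. s j * P i j) = (\<Sum>j\<in>N. \<Sum>i\<in>N. s j * P i j)" by (rule sum.swap)
    also have "\<dots> = (\<Sum>j\<in>N. \<Sum>i\<in>N. s j * P j i)" using Ps by (intro sum.cong refl) (auto simp: N_def)
    finally show ?thesis .
  qed
  have h3: "(\<Sum>i\<in>N. \<Sum>j\<in>N. s i * P i j) = (\<Sum>i\<in>N. \<Sum>j\<in>N. c i j * P i j)"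
  proof -
    have "2 * (\<Sum>i\<in>N. \<Sum>j\<in>N. s i * P i j) = (\<Sum>i\<in>N. \<Sum>j\<in>N. s i * P i j) + (\<Sum>i\<in>N. \<Sum>j\<in>N. s j * P i j)"
      using h2 by simp
    also have "\<dots> = (\<Sum>i\<in>N. \<Sum>j\<in>N. (s i + s j) * P i j)"
      by (simp only: sum.distrib[symmetric] distrib_right)
    also have "\<dots> = 2 * (\<Sum>i\<in>N. \<Sum>j\<in>N. c i j * P i j)"
      by (simp only: h1 sum_distrib_left mult.assoc)
    finally show ?thesis by simp
  qed
  have h4: "(\<Sum>i\<in>N. \<Sum>j\<in>N. c i j * P i j) = (\<Sum>i\<in>N. \<Sum>j\<in>N. if i < j then c i j * P i j else 0)
      + (\<Sum>i\<in>N. \<Sum>j\<in>N. if j < i then c i j * P i j else 0)"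
  proof -
    have "(\<Sum>i\<in>N. \<Sum>j\<in>N. c i j * P i j) = (\<Sum>i\<in>N. \<Sum>j\<in>N. (if i < j then c i j * P i j else 0) + (if j < i then c i j * P i j else 0))"
      by (intro sum.cong refl) (auto simp: Pd)
    then show ?thesis by (simp only: sum.distrib)
  qed
  have h5: "(\<Sum>i\<in>N. \<Sum>j\<in>N. if j < i then c i j * P i j else 0) = (\<Sum>i\<in>N. \<Sum>j\<in>N. if i < j then c i j * P i j else 0)"
  proof -
    have "(\<Sum>i\<in>N. \<Sum>j\<in>N. if j < i then c i j * P i j else 0) = (\<Sum>j\<in>N. \<Sum>i\<in>N. if j < i then c i j * P i j else 0)"
      by (rule sum.swap)
    also have "\<dots> = (\<Sum>j\<in>N. \<Sum>i\<in>N. if j < i then c j i * P j i else 0)"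
      using Ps cs by (intro sum.cong refl) (auto simp: N_def)
    finally show ?thesis .
  qed
  have h6: "(\<Sum>i\<in>N. \<Sum>j\<in>N. if i < j then c i j * P i j else 0)
     = (\<Sum>i\<in>N. \<Sum>j\<in>N. if i < j \<and> even i \<and> even j then P i j else 0)
     - (\<Sum>i\<in>N. \<Sum>j\<in>N. if i < j \<and> odd i \<and> odd j then P i j else 0)"
  proof -
    have "(\<Sum>i\<in>N. \<Sum>j\<in>N. if i < j then c i j * P i j else 0) = (\<Sum>i\<in>N. \<Sum>j\<in>N.
       (if i < j \<and> even i \<and> even j then P i j else 0) - (if i < j \<and> odd i \<and> odd j then P i j else 0))"
      by (intro sum.cong refl) (auto simp: c_def)
    then show ?thesis by (simp only: sum_subtractf)
  qed
  show ?thesis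
    unfolding pairsum N_def[symmetric] s_def[symmetric]
  proof -
    have "(\<Sum>i\<in>N. s i * (\<Sum>j\<in>N. P i j)) = (\<Sum>i\<in>N. \<Sum>j\<in>N. s i * P i j)"
      by (simp add: sum_distrib_left)
    also have "\<dots> = 2 * (\<Sum>i\<in>N. \<Sum>j\<in>N. if i < j then c i j * P i j else 0)"
      using h3 h4 h5 by simp
    also have "\<dots> = 2 * ((\<Sum>i\<in>N. \<Sum>j\<in>N. if i < j \<and> even i \<and> even j then P i j else 0)
     - (\<Sum>i\<in>N. \<Sum>j\<in>N. if i < j \<and> odd i \<and> odd j then P i j else 0))"
      by (simp only: h6)
    finally show "(\<Sum>i\<in>N. s i * (\<Sum>j\<in>N. P i j)) = 2 * ((\<Sum>i\<in>N. \<Sum>j\<in>N. if i < j \<and> even i \<and> even j then P i j else 0)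
     - (\<Sum>i\<in>N. \<Sum>j\<in>N. if i < j \<and> odd i \<and> odd j then P i j else 0))" .
  qed
qed


lemma sum_neg1: "(\<Sum>k=1..2*n. (-1::complex) ^ k) = 0"
proof (induction n)
  case 0 then show ?case by simp
next
  case (Suc n)
  have "{1..2 * Suc n} = insert (2*n+2) (insert (2*n+1) {1..2*n})" by auto
  then have "(\<Sum>k=1..2*Suc n. (-1::complex) ^ k) = (-1)^(2*n+2) + ((-1)^(2*n+1) + (\<Sum>k=1..2*n. (-1::complex) ^ k))"
    by simp
  then show ?case using Suc by simp
qed

theorem lemma5p5:
  fixes \<omega>1 \<omega>2 :: complex and n :: nat and p :: "nat \<Rightarrow> complex"
  assumes indep: "Im (\<omega>2 / \<omega>1) \<noteq> 0"
    and n: "n \<ge> 1"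
    and distinct: "\<forall>i\<in>{1..2*n}. \<forall>j\<in>{1..2*n}. i \<noteq> j \<longrightarrow> p i - p j \<notin> lattice \<omega>1 \<omega>2"
  shows "(\<Sum>i=1..2*n. (-1) ^ i * wp_i (lattice \<omega>1 \<omega>2) n p i)
           = 2 * ((\<Sum>(i,j)\<in>{(i,j). 1 \<le> i \<and> i < j \<and> j \<le> 2*n \<and> even i \<and> even j}.
                       wp_ij (lattice \<omega>1 \<omega>2) p i j)
                - (\<Sum>(i,j)\<in>{(i,j). 1 \<le> i \<and> i < j \<and> j \<le> 2*n \<and> odd i \<and> odd j}.
                       wp_ij (lattice \<omega>1 \<omega>2) p i j))
       \<and> 2 * ((\<Sum>(i,j)\<in>{(i,j). 1 \<le> i \<and> i < j \<and> j \<le> 2*n \<and> even i \<and> even j}.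
                       wp_ij (lattice \<omega>1 \<omega>2) p i j)
                - (\<Sum>(i,j)\<in>{(i,j). 1 \<le> i \<and> i < j \<and> j \<le> 2*n \<and> odd i \<and> odd j}.
                       wp_ij (lattice \<omega>1 \<omega>2) p i j))
           = (\<Sum>i=1..2*n. (-1) ^ i * (zeta_hat_i (lattice \<omega>1 \<omega>2) n p i)\<^sup>2)"
proof -
  interpret wlat \<omega>1 \<omega>2 using indep by unfold_locales
  define P where "P = wp_ij LL p"
  define Z where "Z = zeta_ij LL p"
  define N where "N = {1..2*n}"
  define s :: "nat \<Rightarrow> complex" where "s i = (-1) ^ i" for i
  have Pd: "P i i = 0" for i by (simp add: P_def wp_ij_def)
  have Zd: "Z i i = 0" for i by (simp add: Z_def zeta_ij_def)
  have Ps: "P j i = P i j" for i j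
  proof (cases "i = j")
    case False
    then show ?thesis using wp_even[of "p i - p j"] by (simp add: P_def wp_ij_def)
  qed simp
  have Za: "Z j i = - Z i j" for i j
  proof (cases "i = j")
    case False
    then show ?thesis using wz_odd[of "p i - p j"] by (simp add: Z_def zeta_ij_def)
  qed (simp add: Zd)
  have first: "(\<Sum>i=1..2*n. (-1) ^ i * wp_i LL n p i)
           = 2 * ((\<Sum>(i,j)\<in>{(i,j). 1 \<le> i \<and> i < j \<and> j \<le> 2*n \<and> even i \<and> even j}. wp_ij LL p i j)
                - (\<Sum>(i,j)\<in>{(i,j). 1 \<le> i \<and> i < j \<and> j \<le> 2*n \<and> odd i \<and> odd j}. wp_ij LL p i j))"
    using comb_first[of P n] Pd Ps unfolding wp_i_def P_def by simp
  have second: "(\<Sum>i\<in>N. s i * (\<Sum>j\<in>N. s j * Z i j)^2) = (\<Sum>i\<in>N. s i * (\<Sum>j\<in>N. P i j))"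
  proof (rule comb_main)
    show "finite N" by (simp add: N_def)
    show "s i * s i = 1" for i by (simp add: s_def power_mult_distrib[symmetric])
    show "(\<Sum>k\<in>N. s k) = 0" unfolding N_def s_def by (rule sum_neg1)
    show "Z i i = 0" for i by (rule Zd)
    show "P i i = 0" for i by (rule Pd)
    show "Z j i = - Z i j" for i j by (rule Za)
    show "P j i = P i j" for i j by (rule Ps)
    fix i j k assume ijk: "i \<in> N" "j \<in> N" "k \<in> N" "i \<noteq> j" "j \<noteq> k" "i \<noteq> k"
    define a where "a = p i - p j"
    define b where "b = p j - p k"
    have a: "a \<notin> LL" using distinct ijk by (simp add: a_def N_def)
    have b: "b \<notin> LL" using distinct ijk by (simp add: b_def N_def)
    have ab: "a + b \<notin> LL" using distinct ijk by (simp add: a_def b_def N_def)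
    have ki: "p k - p i = - (a + b)" by (simp add: a_def b_def)
    have "Z i j = ZZ a" "Z j k = ZZ b" using ijk by (simp_all add: Z_def zeta_ij_def a_def b_def)
    moreover have "Z k i = - ZZ (a + b)" using ijk wz_odd[of "a + b"] by (simp add: Z_def zeta_ij_def ki)
    moreover have "P i j = PP a" "P j k = PP b" using ijk by (simp_all add: P_def wp_ij_def a_def b_def)
    moreover have "P k i = PP (a + b)" using ijk wp_even[of "a + b"] by (simp add: P_def wp_ij_def ki)
    ultimately show "(Z i j + Z j k + Z k i)^2 = P i j + P j k + P k i"
      using addition_thm[OF a b ab] by simp
  qed
  have "(\<Sum>i=1..2*n. (-1) ^ i * (zeta_hat_i LL n p i)\<^sup>2) = (\<Sum>i=1..2*n. (-1) ^ i * wp_i LL n p i)"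
    using second unfolding zeta_hat_i_def zeta_hat_ij_def wp_i_def N_def s_def Z_def P_def by simp
  then show ?thesis using first by simp
qed


end
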